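(* Let $X$ be a $P$-space with $X=\bigcup_{\alpha\in\Lambda}X_\alpha$, where each $X_\alpha$ is a closed locally Menger subspace of $X$ and the family $\{X_\alpha:\alpha\in\Lambda\}$ is locally countable in $X$ (every point has a neighbourhood meeting only countably many $X_\alpha$). Then $X$ is locally Menger.
   Context: A $P$-space is a space in which every countable intersection of open sets is open. A space $X$ is Menger if for each sequence $(\mathcal{U}_n)$ of open covers of $X$ there is a sequence $(\mathcal{V}_n)$ with each $\mathcal{V}_n$ a finite subset of $\mathcal{U}_n$ and $\bigcup_{n}\bigcup\mathcal{V}_n=X$. A space $X$ is locally Menger if for each $x\in X$ there exist an open set $U$ and a Menger subspace $Y$ of $X$ with $x\in U\subseteq Y$. *)

theory Defs
  imports "HOL-Analysis.Analysis"
begin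

text \<open>A P-space: every countable intersection of open sets is open.
  Countable (nonempty) families are represented as sequences (finite families by repetition).\<close>
definition P_space :: "'a topology \<Rightarrow> bool" where
  "P_space X \<longleftrightarrow> (\<forall>U :: nat \<Rightarrow> 'a set. (\<forall>n. openin X (U n)) \<longrightarrow> openin X (\<Inter>n. U n))"

definition Menger_space :: "'a topology \<Rightarrow> bool" where
  "Menger_space X \<longleftrightarrow>
     (\<forall>\<U> :: nat \<Rightarrow> 'a set set.
        (\<forall>n. (\<forall>V\<in>\<U> n. openin X V) \<and> topspace X \<subseteq> \<Union>(\<U> n)) \<longrightarrow>
        (\<exists>\<V> :: nat \<Rightarrow> 'a set set. (\<forall>n. finite (\<V> n) \<and> \<V> n \<subseteq> \<U> n) \<and>
            topspace X \<subseteq> (\<Union>n. \<Union>(\<V> n))))"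

definition locally_Menger :: "'a topology \<Rightarrow> bool" where
  "locally_Menger X \<longleftrightarrow>
     (\<forall>x\<in>topspace X. \<exists>U Y. openin X U \<and> Y \<subseteq> topspace X \<and>
         Menger_space (subtopology X Y) \<and> x \<in> U \<and> U \<subseteq> Y)"

end

theory Submission
  imports Defs
begin

lemma Menger_empty: "Menger_space (subtopology X {})"
  unfolding Menger_space_def by (rule allI, rule impI, rule exI[of _ "\<lambda>n. {}"]) auto

lemma Menger_union:
  fixes Y :: "nat \<Rightarrow> 'a set"
  assumes sub: "\<And>k. Y k \<subseteq> topspace X" and men: "\<And>k. Menger_space (subtopology X (Y k))"
  shows "Menger_space (subtopology X (\<Union>k. Y k))"
  unfolding Menger_space_def
proof (intro allI impI)
  fix U :: "nat \<Rightarrow> 'a set set"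
  assume U: "\<forall>n. (\<forall>V\<in>U n. openin (subtopology X (\<Union>k. Y k)) V) \<and> topspace (subtopology X (\<Union>k. Y k)) \<subseteq> \<Union>(U n)"
  have tY: "topspace (subtopology X (\<Union>k. Y k)) = (\<Union>k. Y k)" using sub by auto
  have "\<exists>F. \<forall>m. finite (F m) \<and> F m \<subseteq> U (prod_encode (k,m)) \<and> Y k \<subseteq> (\<Union>m. \<Union>V\<in>F m. V \<inter> Y k)" for k
  proof -
    define U' where "U' m = (\<lambda>V. V \<inter> Y k) ` U (prod_encode (k,m))" for m
    have "(\<forall>V\<in>U' m. openin (subtopology X (Y k)) V) \<and> topspace (subtopology X (Y k)) \<subseteq> \<Union>(U' m)" for m
    proof
      show "\<forall>V\<in>U' m. openin (subtopology X (Y k)) V"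
      proof
        fix V assume "V \<in> U' m"
        then obtain V0 where V0: "V0 \<in> U (prod_encode (k,m))" "V = V0 \<inter> Y k" unfolding U'_def by auto
        then have "openin (subtopology X (\<Union>k. Y k)) V0" using U by blast
        then obtain T where "openin X T" "V0 = T \<inter> (\<Union>k. Y k)" by (auto simp: openin_subtopology)
        then have "V = T \<inter> Y k" using V0 by auto
        then show "openin (subtopology X (Y k)) V" using \<open>openin X T\<close> by (auto simp: openin_subtopology)
      qed
      show "topspace (subtopology X (Y k)) \<subseteq> \<Union>(U' m)"
      proof
        fix y assume "y \<in> topspace (subtopology X (Y k))"
        then have "y \<in> Y k" by auto
        then have "y \<in> \<Union>(U (prod_encode (k,m)))" using U tY by blast
        then show "y \<in> \<Union>(U' m)" using \<open>y \<in> Y k\<close> unfolding U'_def by blast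
      qed
    qed
    then obtain V where V: "\<forall>m. finite (V m) \<and> V m \<subseteq> U' m" "topspace (subtopology X (Y k)) \<subseteq> (\<Union>m. \<Union>(V m))"
      using men[of k] unfolding Menger_space_def by meson
    have "\<exists>F. finite F \<and> F \<subseteq> U (prod_encode (k,m)) \<and> V m = (\<lambda>V. V \<inter> Y k) ` F" for m
    proof -
      have fin: "finite (V m)" and sb: "V m \<subseteq> (\<lambda>V. V \<inter> Y k) ` U (prod_encode (k,m))"
        using V(1) unfolding U'_def by auto
      from finite_subset_image[OF fin sb] show ?thesis by blast
    qed
    then obtain F where F: "\<And>m. finite (F m) \<and> F m \<subseteq> U (prod_encode (k,m)) \<and> V m = (\<lambda>V. V \<inter> Y k) ` F m"
      by metis
    have "Y k \<subseteq> (\<Union>m. \<Union>V\<in>F m. V \<inter> Y k)"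
    proof
      fix y assume "y \<in> Y k"
      then have "y \<in> topspace (subtopology X (Y k))" using sub by auto
      then obtain m where "y \<in> \<Union>(V m)" using V(2) by blast
      then show "y \<in> (\<Union>m. \<Union>V\<in>F m. V \<inter> Y k)" using F[of m] by auto
    qed
    then show ?thesis using F by blast
  qed
  then obtain F where F: "\<And>k m. finite (F k m) \<and> F k m \<subseteq> U (prod_encode (k,m))"
    and Fc: "\<And>k. Y k \<subseteq> (\<Union>m. \<Union>V\<in>F k m. V \<inter> Y k)"
    by metis
  define W where "W n = F (fst (prod_decode n)) (snd (prod_decode n))" for n
  show "\<exists>\<V>. (\<forall>n. finite (\<V> n) \<and> \<V> n \<subseteq> U n) \<and> topspace (subtopology X (\<Union>k. Y k)) \<subseteq> (\<Union>n. \<Union>(\<V> n))"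
  proof (intro exI conjI allI)
    fix n
    obtain k m where n: "n = prod_encode (k,m)" by (metis prod_decode_inverse prod.collapse)
    show "finite (W n)" "W n \<subseteq> U n" using F[of k m] unfolding W_def n by auto
  next
    show "topspace (subtopology X (\<Union>k. Y k)) \<subseteq> (\<Union>n. \<Union>(W n))"
    proof
      fix y assume "y \<in> topspace (subtopology X (\<Union>k. Y k))"
      then obtain k where "y \<in> Y k" using tY by auto
      then obtain m V where "V \<in> F k m" "y \<in> V" using Fc[of k] by blast
      then show "y \<in> (\<Union>n. \<Union>(W n))" unfolding W_def
        by (intro UN_I[of "prod_encode (k,m)"]) auto
    qed
  qed
qed

theorem theorem4p6:
  fixes X :: "'a topology" and \<Lambda> :: "'i set" and XX :: "'i \<Rightarrow> 'a set"
  assumes "P_space X"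
    and "topspace X = (\<Union>\<alpha>\<in>\<Lambda>. XX \<alpha>)"
    and "\<forall>\<alpha>\<in>\<Lambda>. closedin X (XX \<alpha>) \<and> locally_Menger (subtopology X (XX \<alpha>))"
    and "\<forall>x\<in>topspace X. \<exists>N. openin X N \<and> x \<in> N \<and> countable {\<alpha>\<in>\<Lambda>. XX \<alpha> \<inter> N \<noteq> {}}"
  shows "locally_Menger X"
  unfolding locally_Menger_def
proof
  fix x assume x: "x \<in> topspace X"
  obtain N where N: "openin X N" "x \<in> N" "countable {\<alpha>\<in>\<Lambda>. XX \<alpha> \<inter> N \<noteq> {}}"
    using assms(4) x by blast
  define C where "C = {\<alpha>\<in>\<Lambda>. XX \<alpha> \<inter> N \<noteq> {}}"
  have cC: "countable C" using N(3) unfolding C_def .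
  obtain \<alpha>0 where a0: "\<alpha>0 \<in> \<Lambda>" "x \<in> XX \<alpha>0" using assms(2) x by blast
  then have "\<alpha>0 \<in> C" using N(2) unfolding C_def by blast
  then have Cne: "C \<noteq> {}" by blast
  have ex: "\<forall>\<alpha>\<in>C. \<exists>G Y. openin X G \<and> x \<in> G \<and> Y \<subseteq> topspace X \<and> Menger_space (subtopology X Y) \<and> G \<inter> XX \<alpha> \<subseteq> Y"
  proof
    fix \<alpha> assume "\<alpha> \<in> C"
    then have a\<Lambda>: "\<alpha> \<in> \<Lambda>" unfolding C_def by blast
    have cl: "closedin X (XX \<alpha>)" and lm: "locally_Menger (subtopology X (XX \<alpha>))"
      using assms(3) a\<Lambda> by auto
    show "\<exists>G Y. openin X G \<and> x \<in> G \<and> Y \<subseteq> topspace X \<and> Menger_space (subtopology X Y) \<and> G \<inter> XX \<alpha> \<subseteq> Y"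
    proof (cases "x \<in> XX \<alpha>")
      case True
      then have "x \<in> topspace (subtopology X (XX \<alpha>))" using x by simp
      then obtain U Y where UY: "openin (subtopology X (XX \<alpha>)) U" "Y \<subseteq> topspace (subtopology X (XX \<alpha>))"
          "Menger_space (subtopology (subtopology X (XX \<alpha>)) Y)" "x \<in> U" "U \<subseteq> Y"
        using lm unfolding locally_Menger_def by blast
      from UY(1) obtain T where T: "openin X T" "U = T \<inter> XX \<alpha>" by (auto simp: openin_subtopology)
      have YX: "Y \<subseteq> XX \<alpha>" "Y \<subseteq> topspace X" using UY(2) by auto
      have "subtopology (subtopology X (XX \<alpha>)) Y = subtopology X Y"
        by (simp add: subtopology_subtopology Int_absorb1 YX)
      then have "Menger_space (subtopology X Y)" using UY(3) by simp
      then show ?thesis using T YX UY(4,5) by blast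
    next
      case False
      have "openin X (topspace X - XX \<alpha>)" using cl by (simp add: closedin_def)
      then show ?thesis using False x Menger_empty[of X] by (intro exI[of _ "topspace X - XX \<alpha>"] exI[of _ "{}"]) auto
    qed
  qed
  obtain G where G: "\<forall>\<alpha>\<in>C. \<exists>Y. openin X (G \<alpha>) \<and> x \<in> G \<alpha> \<and> Y \<subseteq> topspace X \<and> Menger_space (subtopology X Y) \<and> G \<alpha> \<inter> XX \<alpha> \<subseteq> Y"
    using bchoice[OF ex] by blast
  obtain Y where Y: "\<forall>\<alpha>\<in>C. openin X (G \<alpha>) \<and> x \<in> G \<alpha> \<and> Y \<alpha> \<subseteq> topspace X \<and> Menger_space (subtopology X (Y \<alpha>)) \<and> G \<alpha> \<inter> XX \<alpha> \<subseteq> Y \<alpha>"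
    using bchoice[OF G] by blast
  define f where "f = from_nat_into C"
  have rf: "range f = C" unfolding f_def using range_from_nat_into[OF Cne cC] .
  have fC: "f k \<in> C" for k using rf by blast
  define W where "W = N \<inter> (\<Inter>k. G (f k))"
  have "openin X (\<Inter>k. N \<inter> G (f k))"
    using assms(1) N(1) Y fC unfolding P_space_def by (meson openin_Int)
  moreover have "(\<Inter>k. N \<inter> G (f k)) = W" unfolding W_def by blast
  ultimately have oW: "openin X W" by simp
  have xW: "x \<in> W" unfolding W_def using N(2) Y fC by blast
  have MY: "Menger_space (subtopology X (\<Union>k. Y (f k)))"
    by (rule Menger_union) (use Y fC in blast)+
  have YX: "(\<Union>k. Y (f k)) \<subseteq> topspace X" using Y fC by blast
  have WY: "W \<subseteq> (\<Union>k. Y (f k))"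
  proof
    fix y assume yW: "y \<in> W"
    then have "y \<in> topspace X" using openin_subset[OF N(1)] unfolding W_def by blast
    then obtain \<beta> where b: "\<beta> \<in> \<Lambda>" "y \<in> XX \<beta>" using assms(2) by blast
    then have "\<beta> \<in> C" using yW unfolding C_def W_def by blast
    then obtain k where k: "f k = \<beta>" using rf by blast
    then have "y \<in> G (f k)" using yW unfolding W_def by blast
    then have "y \<in> Y (f k)" using Y fC b k by blast
    then show "y \<in> (\<Union>k. Y (f k))" by blast
  qed
  show "\<exists>U Y. openin X U \<and> Y \<subseteq> topspace X \<and> Menger_space (subtopology X Y) \<and> x \<in> U \<and> U \<subseteq> Y"
    using oW YX MY xW WY by blast
qed

end
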